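(* Let $X$ be a regular topological space. The following are equivalent: (a) $X$ is locally compact (every point has a compact neighborhood); (b) the quantale $\mathcal{O}(X)$ is blooming; (c) the m-filter $\{X\}\in\operatorname{mF}(\mathcal{O}(X))$ is locally solid.
   Context: $\mathcal{O}(X)$ is the quantale of open subsets of $X$, ordered by inclusion, with join = union, multiplication = intersection, top $X$. For a quantale $Q$ (poset with all nonempty joins, top $1$, commutative associative unital multiplication distributing over nonempty joins): an m-filter is a subset containing $1$, upward closed, closed under multiplication. Suspension: order nonempty subsets of $Q$ by $S\le T$ iff each $s\in S$ is below the join of finitely many elements of $T$; $\Sigma Q$ is the poset of equivalence classes with multiplication $S\cdot T=\{st\}$; $\sigma_Q:\Sigma Q\to Q$, $S\mapsto\sum S$. $Q$ is blooming if $\sigma_Q$ has a left adjoint $\sigma_Q^\flat$ (order-preserving with $\sigma_Q^\flat(x)\le S\iff x\le\sigma_Q(S)$) and $\sigma_Q^\flat(ab)=\sigma_Q^\flat(a)\cdot\sigma_Q^\flat(b)$ for all $a,b$. An m-filter $\mathcal{F}$ is locally solid if there is a nonempty $W\subseteq Q$ with $\sum W=1$ such that for every $w\in W$ and every nonempty family $(x_i)_{i\in I}$ with $\sum_ix_i\in\mathcal{F}$ there exist $t\in\mathcal{F}$ and a finite nonempty $I_0\subseteq I$ with $tw\le\sum_{i\in I_0}x_i$. *)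

theory Defs
  imports "HOL-Analysis.Analysis"
begin

text \<open>A quantale is presented by its carrier Q, order le, join operator J
(defined on nonempty subsets), multiplication mul and top element topq.
The elements of the suspension Sigma Q are equivalence classes of nonempty
subsets of Q; we work with representatives and the preorder susp_le.\<close>

definition susp_le ::
  "('q \<Rightarrow> 'q \<Rightarrow> bool) \<Rightarrow> ('q set \<Rightarrow> 'q) \<Rightarrow> 'q set \<Rightarrow> 'q set \<Rightarrow> bool" where
  "susp_le le J S T \<longleftrightarrow>
     (\<forall>s\<in>S. \<exists>F. finite F \<and> F \<noteq> {} \<and> F \<subseteq> T \<and> le s (J F))"

definition susp_eq ::
  "('q \<Rightarrow> 'q \<Rightarrow> bool) \<Rightarrow> ('q set \<Rightarrow> 'q) \<Rightarrow> 'q set \<Rightarrow> 'q set \<Rightarrow> bool" where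
  "susp_eq le J S T \<longleftrightarrow> susp_le le J S T \<and> susp_le le J T S"

definition set_mult :: "('q \<Rightarrow> 'q \<Rightarrow> 'q) \<Rightarrow> 'q set \<Rightarrow> 'q set \<Rightarrow> 'q set" where
  "set_mult mul S T = {mul s t | s t. s \<in> S \<and> t \<in> T}"

text \<open>sigma_Q sends (the class of) S to J S. Blooming: sigma_Q has a left adjoint
(given by representatives f x, well defined up to susp_eq) that preserves
multiplication.\<close>

definition blooming ::
  "'q set \<Rightarrow> ('q \<Rightarrow> 'q \<Rightarrow> bool) \<Rightarrow> ('q set \<Rightarrow> 'q) \<Rightarrow> ('q \<Rightarrow> 'q \<Rightarrow> 'q) \<Rightarrow> bool" where
  "blooming Q le J mul \<longleftrightarrow>
     (\<exists>f. (\<forall>x\<in>Q. f x \<noteq> {} \<and> f x \<subseteq> Q)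
        \<and> (\<forall>x\<in>Q. \<forall>y\<in>Q. le x y \<longrightarrow> susp_le le J (f x) (f y))
        \<and> (\<forall>x\<in>Q. \<forall>S. S \<noteq> {} \<and> S \<subseteq> Q \<longrightarrow> (susp_le le J (f x) S \<longleftrightarrow> le x (J S)))
        \<and> (\<forall>a\<in>Q. \<forall>b\<in>Q. susp_eq le J (f (mul a b)) (set_mult mul (f a) (f b))))"

definition m_filter ::
  "'q set \<Rightarrow> ('q \<Rightarrow> 'q \<Rightarrow> bool) \<Rightarrow> ('q \<Rightarrow> 'q \<Rightarrow> 'q) \<Rightarrow> 'q \<Rightarrow> 'q set \<Rightarrow> bool" where
  "m_filter Q le mul topq F \<longleftrightarrow>
     F \<subseteq> Q \<and> topq \<in> F
     \<and> (\<forall>x\<in>F. \<forall>y\<in>Q. le x y \<longrightarrow> y \<in> F)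
     \<and> (\<forall>x\<in>F. \<forall>y\<in>F. mul x y \<in> F)"

text \<open>Families (x_i) are represented by the set of their members; this is
harmless since only joins of subfamilies matter.\<close>

definition locally_solid ::
  "'q set \<Rightarrow> ('q \<Rightarrow> 'q \<Rightarrow> bool) \<Rightarrow> ('q set \<Rightarrow> 'q) \<Rightarrow> ('q \<Rightarrow> 'q \<Rightarrow> 'q) \<Rightarrow> 'q \<Rightarrow> 'q set \<Rightarrow> bool" where
  "locally_solid Q le J mul topq F \<longleftrightarrow>
     m_filter Q le mul topq F \<and>
     (\<exists>W. W \<noteq> {} \<and> W \<subseteq> Q \<and> J W = topq \<and>
        (\<forall>w\<in>W. \<forall>A. A \<noteq> {} \<and> A \<subseteq> Q \<and> J A \<in> F \<longrightarrow>
           (\<exists>t\<in>F. \<exists>A0. finite A0 \<and> A0 \<noteq> {} \<and> A0 \<subseteq> A \<and> le (mul t w) (J A0))))"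

definition opens :: "'a topology \<Rightarrow> 'a set set" where
  "opens X = {U. openin X U}"

end

theory Submission
  imports Defs
begin

lemma B_LS:
  assumes "blooming (opens X) (\<subseteq>) Union (\<inter>)"
  shows "locally_solid (opens X) (\<subseteq>) Union (\<inter>) (topspace X) {topspace X}"
proof -
  obtain f where f1: "\<forall>x\<in>opens X. f x \<noteq> {} \<and> f x \<subseteq> opens X"
    and f2: "\<forall>x\<in>opens X. \<forall>y\<in>opens X. x \<subseteq> y \<longrightarrow> susp_le (\<subseteq>) Union (f x) (f y)"
    and f3: "\<forall>x\<in>opens X. \<forall>S. S \<noteq> {} \<and> S \<subseteq> opens X \<longrightarrow> (susp_le (\<subseteq>) Union (f x) S \<longleftrightarrow> x \<subseteq> \<Union>S)"
    and f4: "\<forall>a\<in>opens X. \<forall>b\<in>opens X. susp_eq (\<subseteq>) Union (f (a \<inter> b)) (set_mult (\<inter>) (f a) (f b))"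
    using assms unfolding blooming_def by (elim exE conjE)
  have T: "topspace X \<in> opens X" by (simp add: opens_def)
  define W where "W = f (topspace X)"
  have W1: "W \<noteq> {}" "W \<subseteq> opens X" using f1 T unfolding W_def by auto
  have f3': "susp_le (\<subseteq>) Union W S \<longleftrightarrow> topspace X \<subseteq> \<Union>S" if "S \<noteq> {}" "S \<subseteq> opens X" for S
    unfolding W_def using f3 T that by simp
  have "susp_le (\<subseteq>) Union W W" unfolding susp_le_def
  proof
    fix s assume "s \<in> W"
    then show "\<exists>F. finite F \<and> F \<noteq> {} \<and> F \<subseteq> W \<and> s \<subseteq> \<Union>F" by (intro exI[of _ "{s}"]) simp
  qed
  hence "topspace X \<subseteq> \<Union>W" using f3' W1 by simp
  moreover have "\<Union>W \<subseteq> topspace X" using W1 unfolding opens_def by (auto dest: openin_subset)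
  ultimately have W2: "\<Union>W = topspace X" by (rule subset_antisym[rotated])
  have mf: "m_filter (opens X) (\<subseteq>) (\<inter>) (topspace X) {topspace X}"
    unfolding m_filter_def opens_def by (auto dest: openin_subset)
  have P: "\<forall>w\<in>W. \<forall>A. A \<noteq> {} \<and> A \<subseteq> opens X \<and> \<Union>A \<in> {topspace X} \<longrightarrow>
           (\<exists>t\<in>{topspace X}. \<exists>A0. finite A0 \<and> A0 \<noteq> {} \<and> A0 \<subseteq> A \<and> t \<inter> w \<subseteq> \<Union>A0)"
  proof (intro ballI allI impI)
    fix w A assume w: "w \<in> W" and A: "A \<noteq> {} \<and> A \<subseteq> opens X \<and> \<Union>A \<in> {topspace X}"
    have A1: "A \<noteq> {}" "A \<subseteq> opens X" "\<Union>A = topspace X" using A by auto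
    have "susp_le (\<subseteq>) Union W A"
      by (rule iffD2[OF f3'[OF A1(1) A1(2)]]) (simp add: A1(3))
    then have "\<forall>s\<in>W. \<exists>F. finite F \<and> F \<noteq> {} \<and> F \<subseteq> A \<and> s \<subseteq> \<Union>F"
      unfolding susp_le_def .
    then have "\<exists>F. finite F \<and> F \<noteq> {} \<and> F \<subseteq> A \<and> w \<subseteq> \<Union>F" using w by (rule bspec)
    then obtain F where F: "finite F" "F \<noteq> {}" "F \<subseteq> A" "w \<subseteq> \<Union>F"
      by (elim exE conjE)
    have "topspace X \<inter> w \<subseteq> \<Union>F" using F(4) by (rule subset_trans[rotated]) (rule Int_lower2)
    then have "\<exists>A0. finite A0 \<and> A0 \<noteq> {} \<and> A0 \<subseteq> A \<and> topspace X \<inter> w \<subseteq> \<Union>A0"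
      using F(1-3) by (intro exI[of _ F] conjI)
    then show "\<exists>t\<in>{topspace X}. \<exists>A0. finite A0 \<and> A0 \<noteq> {} \<and> A0 \<subseteq> A \<and> t \<inter> w \<subseteq> \<Union>A0"
      by (intro bexI[of _ "topspace X"]) simp_all
  qed
  show ?thesis unfolding locally_solid_def
    apply (rule conjI[OF mf])
    apply (rule exI[of _ W])
    using W1 W2 P by (intro conjI)
qed

lemma LS_LC:
  assumes R: "regular_space X"
    and L: "locally_solid (opens X) (\<subseteq>) Union (\<inter>) (topspace X) {topspace X}"
  shows "locally_compact_space X"
proof -
  obtain W where mf: "m_filter (opens X) (\<subseteq>) (\<inter>) (topspace X) {topspace X}"
    and Wne: "W \<noteq> {}" and W1: "W \<subseteq> opens X" and W2: "\<Union>W = topspace X" and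
    P: "\<forall>w\<in>W. \<forall>A. A \<noteq> {} \<and> A \<subseteq> opens X \<and> \<Union>A \<in> {topspace X} \<longrightarrow>
           (\<exists>t\<in>{topspace X}. \<exists>A0. finite A0 \<and> A0 \<noteq> {} \<and> A0 \<subseteq> A \<and> t \<inter> w \<subseteq> \<Union>A0)"
    using L unfolding locally_solid_def by (elim exE conjE)
  have NBc: "neighbourhood_base_of (closedin X) X" using R by (simp add: neighbourhood_base_of_closedin)
  have cpt: "compactin X (X closure_of w)" if w: "w \<in> W" for w
  proof -
    have wo: "openin X w" using w W1 by (auto simp: opens_def)
    hence wt: "w \<subseteq> topspace X" by (rule openin_subset)
    have wcl: "w \<subseteq> X closure_of w" using wt by (rule closure_of_subset)
    show ?thesis unfolding compactin_def
    proof (intro conjI allI impI closure_of_subset_topspace)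
      fix \<U> assume U: "(\<forall>U\<in>\<U>. openin X U) \<and> X closure_of w \<subseteq> \<Union>\<U>"
      define C where "C = topspace X - X closure_of w"
      define D where "D = {V. openin X V \<and> (\<exists>U. U \<in> \<U> \<and> X closure_of V \<subseteq> U)}"
      define A where "A = insert C D"
      have Co: "openin X C" unfolding C_def by auto
      have Ao: "A \<subseteq> opens X" unfolding A_def D_def opens_def using Co by auto
      have Ane: "A \<noteq> {}" by (simp add: A_def)
      have AU: "\<Union>A = topspace X"
      proof
        show "\<Union>A \<subseteq> topspace X" using Ao by (auto simp: opens_def dest: openin_subset)
        show "topspace X \<subseteq> \<Union>A"
        proof
          fix q assume q: "q \<in> topspace X"
          show "q \<in> \<Union>A"
          proof (cases "q \<in> X closure_of w")
            case False
            then have "q \<in> C" using q by (simp add: C_def)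
            thus ?thesis by (simp add: A_def)
          next
            case True
            then obtain U where UU: "U \<in> \<U>" "q \<in> U" using U by blast
            have oU: "openin X U" using U UU by blast
            obtain V K where VK: "openin X V" "closedin X K" "q \<in> V" "V \<subseteq> K" "K \<subseteq> U"
              using NBc[unfolded neighbourhood_base_of, rule_format, OF conjI[OF oU UU(2)]]
              by (elim exE conjE)
            then have "X closure_of V \<subseteq> U" by (meson closure_of_minimal subset_trans)
            then have "V \<in> D" unfolding D_def using VK UU by blast
            then have "V \<in> A" by (simp add: A_def)
            thus ?thesis using VK(3) by blast
          qed
        qed
      qed
      have "A \<noteq> {} \<and> A \<subseteq> opens X \<and> \<Union>A \<in> {topspace X}" using Ane Ao AU by simp
      then have "\<exists>t\<in>{topspace X}. \<exists>A0. finite A0 \<and> A0 \<noteq> {} \<and> A0 \<subseteq> A \<and> t \<inter> w \<subseteq> \<Union>A0"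
        by (rule mp[OF spec[OF bspec[OF P w]]])
      then obtain t A0 where t: "t \<in> {topspace X}" and A0: "finite A0" "A0 \<subseteq> A" "t \<inter> w \<subseteq> \<Union>A0"
        by (elim bexE exE conjE)
      have tt: "t = topspace X" using t by simp
      define B where "B = A0 - {C}"
      have wB: "w \<subseteq> \<Union>B"
      proof
        fix p assume p: "p \<in> w"
        then have "p \<in> \<Union>A0" using A0(3) wt tt by blast
        then obtain V where V: "V \<in> A0" "p \<in> V" by blast
        have "p \<notin> C" using p wcl by (auto simp: C_def)
        then have "V \<noteq> C" using V by blast
        then show "p \<in> \<Union>B" using V by (auto simp: B_def)
      qed
      have BD: "B \<subseteq> D" using A0(2) unfolding B_def A_def by blast
      have exU: "\<forall>V\<in>B. \<exists>U. U \<in> \<U> \<and> X closure_of V \<subseteq> U" using BD unfolding D_def by blast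
      obtain g where g: "\<forall>V\<in>B. g V \<in> \<U> \<and> X closure_of V \<subseteq> g V"
        using bchoice[OF exU] by (elim exE)
      have fB: "finite B" using A0(1) by (simp add: B_def)
      have "X closure_of w \<subseteq> X closure_of \<Union>B" by (rule closure_of_mono[OF wB])
      also have "\<dots> = (\<Union>V\<in>B. X closure_of V)" by (rule closure_of_Union[OF fB])
      also have "\<dots> \<subseteq> \<Union>(g ` B)" using g by blast
      finally have "X closure_of w \<subseteq> \<Union>(g ` B)" .
      moreover have "g ` B \<subseteq> \<U>" using g by blast
      moreover have "finite (g ` B)" using fB by simp
      ultimately show "\<exists>F. finite F \<and> F \<subseteq> \<U> \<and> X closure_of w \<subseteq> \<Union>F"
        by (intro exI[of _ "g ` B"] conjI)
    qed
  qed
  show ?thesis unfolding locally_compact_space_def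
  proof
    fix x assume "x \<in> topspace X"
    then obtain w where w: "w \<in> W" "x \<in> w" using W2 by blast
    then have wo: "openin X w" using W1 by (auto simp: opens_def)
    moreover have "w \<subseteq> X closure_of w" using closure_of_subset openin_subset[OF wo] .
    ultimately show "\<exists>U K. openin X U \<and> compactin X K \<and> x \<in> U \<and> U \<subseteq> K"
      using cpt[OF w(1)] w(2) by (intro exI conjI)
  qed
qed

lemma LC_B:
  assumes R: "regular_space X" and L: "locally_compact_space X"
  shows "blooming (opens X) (\<subseteq>) Union (\<inter>)"
proof -
  have NB: "neighbourhood_base_of (\<lambda>C. compactin X C \<and> closedin X C) X"
    using iffD1[OF locally_compact_regular_space_neighbourhood_base, OF conjI[OF L R]] .
  define f where "f x = {y. openin X y \<and> (\<exists>K. compactin X K \<and> closedin X K \<and> y \<subseteq> K \<and> K \<subseteq> x)}" for x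
  have cover: "x \<subseteq> \<Union>(f x)" if ox: "openin X x" for x
  proof
    fix p assume "p \<in> x"
    then obtain U V where "openin X U" "compactin X V" "closedin X V" "p \<in> U" "U \<subseteq> V" "V \<subseteq> x"
      using NB[unfolded neighbourhood_base_of, rule_format, OF conjI[OF ox \<open>p \<in> x\<close>]]
      by (elim exE conjE)
    thus "p \<in> \<Union>(f x)" unfolding f_def by blast
  qed
  have c1: "\<forall>x\<in>opens X. f x \<noteq> {} \<and> f x \<subseteq> opens X"
  proof
    fix x
    have "{} \<in> f x" unfolding f_def using compactin_empty closedin_empty openin_empty by blast
    moreover have "f x \<subseteq> opens X" unfolding f_def opens_def by auto
    ultimately show "f x \<noteq> {} \<and> f x \<subseteq> opens X" by blast
  qed
  have c2: "\<forall>x\<in>opens X. \<forall>y\<in>opens X. x \<subseteq> y \<longrightarrow> susp_le (\<subseteq>) Union (f x) (f y)"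
  proof (intro ballI impI)
    fix x y assume "x \<in> opens X" "y \<in> opens X" "x \<subseteq> y"
    then have "f x \<subseteq> f y" unfolding f_def by blast
    then show "susp_le (\<subseteq>) Union (f x) (f y)" unfolding susp_le_def
      by (intro ballI, rule_tac x="{s}" for s in exI) auto
  qed
  have c3: "\<forall>x\<in>opens X. \<forall>S. S \<noteq> {} \<and> S \<subseteq> opens X \<longrightarrow> (susp_le (\<subseteq>) Union (f x) S \<longleftrightarrow> x \<subseteq> \<Union>S)"
  proof (intro ballI allI impI iffI)
    fix x S assume x: "x \<in> opens X" and S: "S \<noteq> {} \<and> S \<subseteq> opens X"
      and le: "susp_le (\<subseteq>) Union (f x) S"
    have "\<Union>(f x) \<subseteq> \<Union>S"
    proof
      fix p assume "p \<in> \<Union>(f x)"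
      then obtain s where "s \<in> f x" "p \<in> s" by blast
      then obtain F where "F \<subseteq> S" "s \<subseteq> \<Union>F" using le unfolding susp_le_def by blast
      thus "p \<in> \<Union>S" using \<open>p \<in> s\<close> by blast
    qed
    moreover have "x \<subseteq> \<Union>(f x)" using cover x by (simp add: opens_def)
    ultimately show "x \<subseteq> \<Union>S" by blast
  next
    fix x S assume x: "x \<in> opens X" and S: "S \<noteq> {} \<and> S \<subseteq> opens X"
      and le: "x \<subseteq> \<Union>S"
    show "susp_le (\<subseteq>) Union (f x) S" unfolding susp_le_def
    proof
      fix s assume "s \<in> f x"
      then obtain K where K: "compactin X K" "s \<subseteq> K" "K \<subseteq> x" unfolding f_def by blast
      have "\<forall>U\<in>S. openin X U" using S by (auto simp: opens_def)
      moreover have "K \<subseteq> \<Union>S" using K le by blast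
      ultimately obtain F where F: "finite F" "F \<subseteq> S" "K \<subseteq> \<Union>F"
        using K(1) unfolding compactin_def by metis
      obtain u where u: "u \<in> S" using S by blast
      show "\<exists>F. finite F \<and> F \<noteq> {} \<and> F \<subseteq> S \<and> s \<subseteq> \<Union>F"
        using F K u by (intro exI[of _ "insert u F"]) auto
    qed
  qed
  have c4: "\<forall>a\<in>opens X. \<forall>b\<in>opens X. susp_eq (\<subseteq>) Union (f (a \<inter> b)) (set_mult (\<inter>) (f a) (f b))"
  proof (intro ballI)
    fix a b
    have "susp_le (\<subseteq>) Union (f (a \<inter> b)) (set_mult (\<inter>) (f a) (f b))" unfolding susp_le_def
    proof
      fix s assume "s \<in> f (a \<inter> b)"
      then have "s \<in> f a" "s \<in> f b" unfolding f_def by blast+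
      then have "s \<in> set_mult (\<inter>) (f a) (f b)" unfolding set_mult_def by blast
      then show "\<exists>F. finite F \<and> F \<noteq> {} \<and> F \<subseteq> set_mult (\<inter>) (f a) (f b) \<and> s \<subseteq> \<Union>F"
        by (intro exI[of _ "{s}"]) auto
    qed
    moreover have "susp_le (\<subseteq>) Union (set_mult (\<inter>) (f a) (f b)) (f (a \<inter> b))" unfolding susp_le_def
    proof
      fix r assume "r \<in> set_mult (\<inter>) (f a) (f b)"
      then obtain s t where r: "r = s \<inter> t" "s \<in> f a" "t \<in> f b" unfolding set_mult_def by blast
      then obtain K L where K: "openin X s" "compactin X K" "closedin X K" "s \<subseteq> K" "K \<subseteq> a"
        and L: "openin X t" "compactin X L" "closedin X L" "t \<subseteq> L" "L \<subseteq> b"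
        unfolding f_def by blast
      have "compactin X (K \<inter> L)" using closed_compactin[OF K(2) _ closedin_Int[OF K(3) L(3)]] by blast
      moreover have "closedin X (K \<inter> L)" using K(3) L(3) by blast
      ultimately have "r \<in> f (a \<inter> b)" unfolding f_def using r K L by blast
      then show "\<exists>F. finite F \<and> F \<noteq> {} \<and> F \<subseteq> f (a \<inter> b) \<and> r \<subseteq> \<Union>F"
        by (intro exI[of _ "{r}"]) auto
    qed
    ultimately show "susp_eq (\<subseteq>) Union (f (a \<inter> b)) (set_mult (\<inter>) (f a) (f b))"
      unfolding susp_eq_def by blast
  qed
  show ?thesis unfolding blooming_def
    apply (rule exI[of _ f])
    using c1 c2 c3 c4 by (intro conjI)
qed



theorem mainTheorem10:
  fixes X :: "'a topology"
  assumes "regular_space X"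
  shows "(locally_compact_space X \<longleftrightarrow> blooming (opens X) (\<subseteq>) Union (\<inter>))
       \<and> (blooming (opens X) (\<subseteq>) Union (\<inter>) \<longleftrightarrow>
            locally_solid (opens X) (\<subseteq>) Union (\<inter>) (topspace X) {topspace X})"
proof -
  have a: "locally_compact_space X \<Longrightarrow> blooming (opens X) (\<subseteq>) Union (\<inter>)"
    using LC_B assms by blast
  have b: "blooming (opens X) (\<subseteq>) Union (\<inter>) \<Longrightarrow>
            locally_solid (opens X) (\<subseteq>) Union (\<inter>) (topspace X) {topspace X}"
    by (rule B_LS)
  have c: "locally_solid (opens X) (\<subseteq>) Union (\<inter>) (topspace X) {topspace X} \<Longrightarrow>
            locally_compact_space X"
    using LS_LC assms by blast
  show ?thesis
  proof (intro conjI iffI)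
    show "blooming (opens X) (\<subseteq>) Union (\<inter>)" if "locally_compact_space X" using that by (rule a)
    show "locally_compact_space X" if "blooming (opens X) (\<subseteq>) Union (\<inter>)" using that by (rule c[OF b])
    show "locally_solid (opens X) (\<subseteq>) Union (\<inter>) (topspace X) {topspace X}"
      if "blooming (opens X) (\<subseteq>) Union (\<inter>)" using that by (rule b)
    show "blooming (opens X) (\<subseteq>) Union (\<inter>)"
      if "locally_solid (opens X) (\<subseteq>) Union (\<inter>) (topspace X) {topspace X}" using that by (rule a[OF c])
  qed
qed

end
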